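(* Let $\mathcal{X}=\mathcal{X}_1\times\cdots\times\mathcal{X}_d$ and let $M:\mathcal{X}^n\to\mathcal{Y}$ be a randomized algorithm. (1) If $M$ satisfies $\varepsilon_0$-$\nabla_0$DP, then $M$ satisfies $(d\varepsilon_0)$-DP. (2) If $M$ satisfies $\varepsilon_0$-$\nabla_0$CDP, then $M$ satisfies $\frac12 d^2\varepsilon_0^2$-zCDP, which in turn implies that $M$ satisfies $(\tilde\varepsilon,\tilde\delta)$-DP for every $\tilde\varepsilon\ge\frac12 d^2\varepsilon_0^2$ with $\tilde\delta=\exp\!\left(-(\tilde\varepsilon-\frac12 d^2\varepsilon_0^2)^2/(2d^2\varepsilon_0^2)\right)$. (3) More generally, if $M$ satisfies $\varepsilon$-$\nabla$DP for a symmetric non-negative $\varepsilon:\mathcal{X}\times\mathcal{X}\to\mathbb{R}$, then $M$ satisfies $(\sup_{x,x'\in\mathcal{X}}\varepsilon(x,x'))$-DP. (4) Conversely, if $M$ satisfies $\varepsilon$-DP for a constant $\varepsilon\ge0$, then $M$ satisfies $\varepsilon$-$\nabla$DP (with $\varepsilon$ viewed as a constant function) and $\varepsilon$-$\nabla_0$DP.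
   Context: Two datasets $x,x'\in\mathcal{X}^n$ differ on a single entry if there is $i$ with $x_j=x'_j$ for all $j\ne i$. $M$ is $(\varepsilon,\delta)$-DP if for all such $x,x'$ and measurable $S$, $\Pr[M(x)\in S]\le e^{\varepsilon}\Pr[M(x')\in S]+\delta$; $\varepsilon$-DP means $\delta=0$. Rényi divergence: $D_\lambda(P\|Q)=\frac{1}{\lambda-1}\log\mathbb{E}_{X\sim P}[(P(X)/Q(X))^{\lambda-1}]$, $D_*(P\|Q)=\sup_{\lambda>1}\frac1\lambda D_\lambda(P\|Q)$. $M$ is $\frac12\varepsilon^2$-zCDP if $D_*(M(x)\|M(x'))\le\frac12\varepsilon^2$ for all such $x,x'$. For symmetric non-negative $\varepsilon:\mathcal{X}\times\mathcal{X}\to\mathbb{R}$, $M$ is $\varepsilon$-$\nabla$DP if for all $x,x'$ differing only in entry $i$, $\Pr[M(x)\in S]\le e^{\varepsilon(x_i,x'_i)}\Pr[M(x')\in S]$ for all $S$; $\varepsilon$-$\nabla$CDP if $D_*(M(x)\|M(x'))\le\frac12\varepsilon(x_i,x'_i)^2$. With $\|u-v\|_0=|\{j\in[d]:u_j\ne v_j\}|$ for $u,v\in\mathcal{X}$, $\varepsilon_0$-$\nabla_0$DP (resp. $\varepsilon_0$-$\nabla_0$CDP) means $\varepsilon$-$\nabla$DP (resp. $\varepsilon$-$\nabla$CDP) with $\varepsilon(u,v)=\varepsilon_0\|u-v\|_0$. *)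

theory Defs
  imports "HOL-Probability.Probability"
begin

definition data_universe :: "(nat \<Rightarrow> 'a set) \<Rightarrow> nat \<Rightarrow> (nat \<Rightarrow> 'a) set" where
  "data_universe Xs d = PiE {..<d} Xs"

definition datasets :: "(nat \<Rightarrow> 'a set) \<Rightarrow> nat \<Rightarrow> nat \<Rightarrow> (nat \<Rightarrow> nat \<Rightarrow> 'a) set" where
  "datasets Xs d n = PiE {..<n} (\<lambda>_. data_universe Xs d)"

definition differ_at :: "nat \<Rightarrow> (nat \<Rightarrow> 'x) \<Rightarrow> (nat \<Rightarrow> 'x) \<Rightarrow> nat \<Rightarrow> bool" where
  "differ_at n x x' i \<longleftrightarrow> i < n \<and> (\<forall>j<n. j \<noteq> i \<longrightarrow> x j = x' j)"

definition hamming0 :: "nat \<Rightarrow> (nat \<Rightarrow> 'a) \<Rightarrow> (nat \<Rightarrow> 'a) \<Rightarrow> nat" where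
  "hamming0 d u v = card {j \<in> {..<d}. u j \<noteq> v j}"

definition randomized_alg :: "(nat \<Rightarrow> 'x) set \<Rightarrow> 'b measure \<Rightarrow> ((nat \<Rightarrow> 'x) \<Rightarrow> 'b measure) \<Rightarrow> bool" where
  "randomized_alg D Y M \<longleftrightarrow> (\<forall>x\<in>D. prob_space (M x) \<and> sets (M x) = sets Y)"

definition approx_dp :: "(nat \<Rightarrow> 'x) set \<Rightarrow> nat \<Rightarrow> 'b measure \<Rightarrow> ((nat \<Rightarrow> 'x) \<Rightarrow> 'b measure)
    \<Rightarrow> real \<Rightarrow> real \<Rightarrow> bool" where
  "approx_dp D n Y M eps delta \<longleftrightarrow>
     (\<forall>x\<in>D. \<forall>x'\<in>D. \<forall>i. differ_at n x x' i \<longrightarrow>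
        (\<forall>S\<in>sets Y. measure (M x) S \<le> exp eps * measure (M x') S + delta))"

abbreviation pure_dp :: "(nat \<Rightarrow> 'x) set \<Rightarrow> nat \<Rightarrow> 'b measure \<Rightarrow> ((nat \<Rightarrow> 'x) \<Rightarrow> 'b measure)
    \<Rightarrow> real \<Rightarrow> bool" where
  "pure_dp D n Y M eps \<equiv> approx_dp D n Y M eps 0"

text \<open>Renyi divergence of order lam of P from Q (infinite unless P << Q);
  RN_deriv Q P is the density dP/dQ.\<close>
definition renyi_div :: "real \<Rightarrow> 'b measure \<Rightarrow> 'b measure \<Rightarrow> ereal" where
  "renyi_div lam P Q =
     (if absolutely_continuous Q P then
        (let E = (\<integral>\<^sup>+ y. ennreal (enn2real (RN_deriv Q P y) powr (lam - 1)) \<partial>P)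
         in if E = \<infinity> then \<infinity> else ereal (ln (enn2real E) / (lam - 1)))
      else \<infinity>)"

definition renyi_star :: "'b measure \<Rightarrow> 'b measure \<Rightarrow> ereal" where
  "renyi_star P Q = (SUP lam\<in>{1<..}. renyi_div lam P Q / ereal lam)"

text \<open>rho-zCDP (rho = eps^2/2 in the paper's notation).\<close>
definition zcdp :: "(nat \<Rightarrow> 'x) set \<Rightarrow> nat \<Rightarrow> ((nat \<Rightarrow> 'x) \<Rightarrow> 'b measure) \<Rightarrow> real \<Rightarrow> bool" where
  "zcdp D n M rho \<longleftrightarrow>
     (\<forall>x\<in>D. \<forall>x'\<in>D. \<forall>i. differ_at n x x' i \<longrightarrow> renyi_star (M x) (M x') \<le> ereal rho)"

definition nabla_dp :: "(nat \<Rightarrow> 'x) set \<Rightarrow> nat \<Rightarrow> 'b measure \<Rightarrow> ((nat \<Rightarrow> 'x) \<Rightarrow> 'b measure)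
    \<Rightarrow> ('x \<Rightarrow> 'x \<Rightarrow> real) \<Rightarrow> bool" where
  "nabla_dp D n Y M eps \<longleftrightarrow>
     (\<forall>x\<in>D. \<forall>x'\<in>D. \<forall>i. differ_at n x x' i \<longrightarrow>
        (\<forall>S\<in>sets Y. measure (M x) S \<le> exp (eps (x i) (x' i)) * measure (M x') S))"

definition nabla_cdp :: "(nat \<Rightarrow> 'x) set \<Rightarrow> nat \<Rightarrow> ((nat \<Rightarrow> 'x) \<Rightarrow> 'b measure)
    \<Rightarrow> ('x \<Rightarrow> 'x \<Rightarrow> real) \<Rightarrow> bool" where
  "nabla_cdp D n M eps \<longleftrightarrow>
     (\<forall>x\<in>D. \<forall>x'\<in>D. \<forall>i. differ_at n x x' i \<longrightarrow>
        renyi_star (M x) (M x') \<le> ereal ((eps (x i) (x' i))\<^sup>2 / 2))"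

definition nabla0_dp :: "nat \<Rightarrow> (nat \<Rightarrow> (nat \<Rightarrow> 'a)) set \<Rightarrow> nat \<Rightarrow> 'b measure
    \<Rightarrow> ((nat \<Rightarrow> (nat \<Rightarrow> 'a)) \<Rightarrow> 'b measure) \<Rightarrow> real \<Rightarrow> bool" where
  "nabla0_dp d D n Y M eps0 \<longleftrightarrow> nabla_dp D n Y M (\<lambda>u v. eps0 * real (hamming0 d u v))"

definition nabla0_cdp :: "nat \<Rightarrow> (nat \<Rightarrow> (nat \<Rightarrow> 'a)) set \<Rightarrow> nat
    \<Rightarrow> ((nat \<Rightarrow> (nat \<Rightarrow> 'a)) \<Rightarrow> 'b measure) \<Rightarrow> real \<Rightarrow> bool" where
  "nabla0_cdp d D n M eps0 \<longleftrightarrow> nabla_cdp D n M (\<lambda>u v. eps0 * real (hamming0 d u v))"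

end

theory Submission imports Defs begin

lemma zcdp_core:
  fixes P Q :: "'b measure" and rho eps :: real
  assumes P: "prob_space P" and Q: "prob_space Q" and sets: "sets P = sets Q"
    and R: "renyi_star P Q \<le> ereal rho" and rho: "rho > 0" and eps: "eps > rho"
    and S: "S \<in> sets P"
  shows "measure P S \<le> exp eps * measure Q S + exp (- ((eps - rho)\<^sup>2 / (4 * rho)))"
proof -
  interpret P: prob_space P by fact
  interpret Q: prob_space Q by fact
  define lam where "lam = (eps + rho) / (2 * rho)"
  have lam1: "lam > 1" using rho eps by (simp add: lam_def field_simps)
  have "renyi_div lam P Q / ereal lam \<le> ereal rho"
    using R lam1 unfolding renyi_star_def by (meson SUP_le_iff greaterThan_iff)
  hence rd: "renyi_div lam P Q \<le> ereal (rho * lam)"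
    using lam1 by (cases "renyi_div lam P Q") (auto simp: field_simps split: if_splits)
  define f where "f y = enn2real (RN_deriv Q P y)" for y
  define E where "E = (\<integral>\<^sup>+ y. ennreal (f y powr (lam - 1)) \<partial>P)"
  have ac: "absolutely_continuous Q P" and Einf: "E \<noteq> \<infinity>"
    and lnE: "ln (enn2real E) / (lam - 1) \<le> rho * lam"
    using rd unfolding renyi_div_def E_def f_def Let_def by (auto split: if_splits)
  have Ebound: "enn2real E \<le> exp ((lam - 1) * (rho * lam))"
  proof (cases "enn2real E > 0")
    case True
    have "ln (enn2real E) \<le> (lam - 1) * (rho * lam)" using lnE lam1 by (simp add: field_simps)
    thus ?thesis using True by (metis exp_ln exp_le_cancel_iff)
  next
    case False thus ?thesis by (smt (verit) exp_gt_zero)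
  qed
  define B where "B = {y \<in> space P. f y > exp eps}"
  have fm[measurable]: "f \<in> borel_measurable P"
    unfolding f_def using measurable_cong_sets[OF sets refl] by (metis borel_measurable_RN_deriv borel_measurable_enn2real measurable_cong_sets sets)
  have Bm: "B \<in> sets P" unfolding B_def by measurable
  have "ennreal (exp (eps * (lam - 1))) * emeasure P B
      = (\<integral>\<^sup>+ y. ennreal (exp (eps * (lam - 1))) * indicator B y \<partial>P)"
    using Bm by (simp add: nn_integral_cmult_indicator)
  also have "\<dots> \<le> E" unfolding E_def
  proof (rule nn_integral_mono)
    fix y assume "y \<in> space P"
    show "ennreal (exp (eps * (lam - 1))) * indicator B y \<le> ennreal (f y powr (lam - 1))"
    proof (cases "y \<in> B")
      case True
      hence fy: "f y > exp eps" by (simp add: B_def)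
      have "exp (eps * (lam - 1)) = exp eps powr (lam - 1)" by (simp add: powr_def)
      also have "\<dots> \<le> f y powr (lam - 1)" using fy lam1 by (intro powr_mono2) auto
      finally show ?thesis using True by simp
    qed simp
  qed
  finally have "ennreal (exp (eps * (lam - 1))) * emeasure P B \<le> E" .
  hence "ennreal (exp (eps * (lam - 1)) * measure P B) \<le> E"
    by (simp add: P.emeasure_eq_measure ennreal_mult)
  hence "enn2real (ennreal (exp (eps * (lam - 1)) * measure P B)) \<le> enn2real E"
    using Einf by (intro enn2real_mono) (auto simp: top.not_eq_extremum)
  hence "exp (eps * (lam - 1)) * measure P B \<le> enn2real E" by simp
  hence "measure P B \<le> enn2real E / exp (eps * (lam - 1))" by (simp add: field_simps)
  also have "\<dots> \<le> exp ((lam - 1) * (rho * lam)) / exp (eps * (lam - 1))"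
    using Ebound by (simp add: divide_right_mono)
  also have "\<dots> = exp ((lam - 1) * (rho * lam) - eps * (lam - 1))" by (simp add: exp_diff)
  also have "(lam - 1) * (rho * lam) - eps * (lam - 1) = - ((eps - rho)\<^sup>2 / (4 * rho))"
    using rho unfolding lam_def by (simp add: field_simps power2_eq_square)
  finally have PB: "measure P B \<le> exp (- ((eps - rho)\<^sup>2 / (4 * rho)))" .
  have SQ: "S \<in> sets Q" using S sets by simp
  have dens: "density Q (RN_deriv Q P) = P"
    using Q.density_RN_deriv[OF ac sets] .
  have fin: "AE y in Q. RN_deriv Q P y \<noteq> \<infinity>"
    using Q.RN_deriv_finite[OF _ ac sets] P.sigma_finite_measure by blast
  have SBm: "S - B \<in> sets Q" using S Bm sets by auto
  have "emeasure P (S - B) = (\<integral>\<^sup>+ y. RN_deriv Q P y * indicator (S - B) y \<partial>Q)"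
    by (subst dens[symmetric]) (simp add: emeasure_density SBm)
  also have "\<dots> \<le> (\<integral>\<^sup>+ y. ennreal (exp eps) * indicator S y \<partial>Q)"
  proof (rule nn_integral_mono_AE)
    show "AE y in Q. RN_deriv Q P y * indicator (S - B) y \<le> ennreal (exp eps) * indicator S y"
      using fin
    proof eventually_elim
      case (elim y)
      show ?case
      proof (cases "y \<in> S - B")
        case True
        hence "y \<in> space P" using S sets.sets_into_space by blast
        hence "f y \<le> exp eps" using True by (auto simp: B_def)
        hence "ennreal (enn2real (RN_deriv Q P y)) \<le> ennreal (exp eps)" unfolding f_def
          by (rule ennreal_leI)
        moreover have "ennreal (enn2real (RN_deriv Q P y)) = RN_deriv Q P y"
          using elim by (simp add: top.not_eq_extremum)
        ultimately have "RN_deriv Q P y \<le> ennreal (exp eps)" by simp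
        thus ?thesis using True by simp
      qed simp
    qed
  qed
  also have "\<dots> = ennreal (exp eps) * emeasure Q S" using SQ by (simp add: nn_integral_cmult_indicator)
  finally have "emeasure P (S - B) \<le> ennreal (exp eps) * emeasure Q S" .
  hence PSB: "measure P (S - B) \<le> exp eps * measure Q S"
    by (simp add: P.emeasure_eq_measure Q.emeasure_eq_measure ennreal_mult''[symmetric])
  have "measure P S \<le> measure P (S - B) + measure P B"
  proof -
    have "S \<subseteq> (S - B) \<union> B" by auto
    hence "measure P S \<le> measure P ((S - B) \<union> B)"
      using S Bm by (intro P.finite_measure_mono) auto
    also have "\<dots> \<le> measure P (S - B) + measure P B"
      using S Bm by (intro measure_Un_le) auto
    finally show ?thesis .
  qed
  thus ?thesis using PSB PB by linarith
qed

lemma hamming0_le: "hamming0 d u v \<le> d"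
proof -
  have "card {j \<in> {..<d}. u j \<noteq> v j} \<le> card {..<d}" by (intro card_mono) auto
  thus ?thesis by (simp add: hamming0_def)
qed

lemma hamming0_zero:
  assumes "u \<in> data_universe Xs d" "v \<in> data_universe Xs d" "hamming0 d u v = 0"
  shows "u = v"
proof -
  have "{j \<in> {..<d}. u j \<noteq> v j} = {}" using assms(3) by (simp add: hamming0_def)
  thus ?thesis using assms(1,2) unfolding data_universe_def by (intro PiE_ext) auto
qed

lemma differ_in_datasets:
  assumes "x \<in> datasets Xs d n" "x' \<in> datasets Xs d n" "differ_at n x x' i"
  shows "x i \<in> data_universe Xs d" "x' i \<in> data_universe Xs d"
  using assms by (auto simp: datasets_def differ_at_def)

lemma differ_eq:
  assumes "x \<in> datasets Xs d n" "x' \<in> datasets Xs d n" "differ_at n x x' i" "x i = x' i"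
  shows "x = x'"
  using assms unfolding datasets_def differ_at_def by (intro PiE_ext) auto

theorem proposition2p8:
  fixes Xs :: "nat \<Rightarrow> 'a set" and d n :: nat and Y :: "'b measure"
    and M :: "(nat \<Rightarrow> nat \<Rightarrow> 'a) \<Rightarrow> 'b measure"
  assumes alg: "randomized_alg (datasets Xs d n) Y M"
  shows
    "(\<forall>eps0 \<ge> 0. nabla0_dp d (datasets Xs d n) n Y M eps0
        \<longrightarrow> pure_dp (datasets Xs d n) n Y M (real d * eps0))
   \<and> (\<forall>eps0 \<ge> 0. nabla0_cdp d (datasets Xs d n) n M eps0
        \<longrightarrow> zcdp (datasets Xs d n) n M ((real d)\<^sup>2 * eps0\<^sup>2 / 2)
          \<and> (\<forall>eps' \<ge> (real d)\<^sup>2 * eps0\<^sup>2 / 2.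
               approx_dp (datasets Xs d n) n Y M eps'
                 (exp (- ((eps' - (real d)\<^sup>2 * eps0\<^sup>2 / 2)\<^sup>2 / (2 * (real d)\<^sup>2 * eps0\<^sup>2))))))
   \<and> (\<forall>eps :: (nat \<Rightarrow> 'a) \<Rightarrow> (nat \<Rightarrow> 'a) \<Rightarrow> real.
        (\<forall>u\<in>data_universe Xs d. \<forall>v\<in>data_universe Xs d. eps u v = eps v u \<and> 0 \<le> eps u v)
        \<longrightarrow> bdd_above ((\<lambda>(u, v). eps u v) ` (data_universe Xs d \<times> data_universe Xs d))
        \<longrightarrow> nabla_dp (datasets Xs d n) n Y M eps
        \<longrightarrow> pure_dp (datasets Xs d n) n Y M
              (SUP (u, v)\<in>data_universe Xs d \<times> data_universe Xs d. eps u v))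
   \<and> (\<forall>e \<ge> 0. pure_dp (datasets Xs d n) n Y M e
        \<longrightarrow> nabla_dp (datasets Xs d n) n Y M (\<lambda>_ _. e)
          \<and> nabla0_dp d (datasets Xs d n) n Y M e)"
proof (intro conjI allI impI)
  let ?D = "datasets Xs d n"
  have alg': "\<And>x. x \<in> ?D \<Longrightarrow> prob_space (M x) \<and> sets (M x) = sets Y"
    using alg by (simp add: randomized_alg_def)
  fix eps0 :: real assume e0: "eps0 \<ge> 0" and H: "nabla0_dp d ?D n Y M eps0"
  show "pure_dp ?D n Y M (real d * eps0)"
    unfolding approx_dp_def
  proof (intro ballI allI impI)
    fix x x' i S assume x: "x \<in> ?D" and x': "x' \<in> ?D" and di: "differ_at n x x' i" and S: "S \<in> sets Y"
    have "measure (M x) S \<le> exp (eps0 * real (hamming0 d (x i) (x' i))) * measure (M x') S"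
      using H x x' di S unfolding nabla0_dp_def nabla_dp_def by blast
    also have "\<dots> \<le> exp (real d * eps0) * measure (M x') S"
      using hamming0_le[of d "x i" "x' i"] e0
      by (intro mult_right_mono) (auto simp: mult.commute mult_left_mono)
    finally show "measure (M x) S \<le> exp (real d * eps0) * measure (M x') S + 0" by simp
  qed
next
  let ?D = "datasets Xs d n"
  fix eps0 :: real assume e0: "eps0 \<ge> 0" and H: "nabla0_cdp d ?D n M eps0"
  show Z: "zcdp ?D n M ((real d)\<^sup>2 * eps0\<^sup>2 / 2)"
    unfolding zcdp_def
  proof (intro ballI allI impI)
    fix x x' i assume x: "x \<in> ?D" and x': "x' \<in> ?D" and di: "differ_at n x x' i"
    have "renyi_star (M x) (M x') \<le> ereal ((eps0 * real (hamming0 d (x i) (x' i)))\<^sup>2 / 2)"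
      using H x x' di unfolding nabla0_cdp_def nabla_cdp_def by blast
    also have "\<dots> \<le> ereal ((real d)\<^sup>2 * eps0\<^sup>2 / 2)"
    proof -
      have "eps0 * real (hamming0 d (x i) (x' i)) \<le> eps0 * real d"
        using hamming0_le[of d "x i" "x' i"] e0 by (intro mult_left_mono) auto
      hence "(eps0 * real (hamming0 d (x i) (x' i)))\<^sup>2 \<le> (eps0 * real d)\<^sup>2"
        using e0 by (intro power_mono) auto
      thus ?thesis by (simp add: power_mult_distrib mult.commute)
    qed
    finally show "renyi_star (M x) (M x') \<le> ereal ((real d)\<^sup>2 * eps0\<^sup>2 / 2)" .
  qed
  fix eps' :: real assume ep: "eps' \<ge> (real d)\<^sup>2 * eps0\<^sup>2 / 2"
  define rho where "rho = (real d)\<^sup>2 * eps0\<^sup>2 / 2"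
  have alg': "\<And>x. x \<in> ?D \<Longrightarrow> prob_space (M x) \<and> sets (M x) = sets Y"
    using alg by (simp add: randomized_alg_def)
  show "approx_dp ?D n Y M eps'
          (exp (- ((eps' - (real d)\<^sup>2 * eps0\<^sup>2 / 2)\<^sup>2 / (2 * (real d)\<^sup>2 * eps0\<^sup>2))))"
    unfolding approx_dp_def
  proof (intro ballI allI impI)
    fix x x' i S assume x: "x \<in> ?D" and x': "x' \<in> ?D" and di: "differ_at n x x' i" and S: "S \<in> sets Y"
    interpret Px: prob_space "M x" using alg' x by blast
    interpret Px': prob_space "M x'" using alg' x' by blast
    have triv: "measure (M x) S \<le> exp eps' * measure (M x') S + 1"
      using Px.prob_le_1[of S] by (smt (verit) exp_gt_zero measure_nonneg mult_nonneg_nonneg)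
    show "measure (M x) S \<le> exp eps' * measure (M x') S +
          exp (- ((eps' - (real d)\<^sup>2 * eps0\<^sup>2 / 2)\<^sup>2 / (2 * (real d)\<^sup>2 * eps0\<^sup>2)))"
    proof (cases "rho > 0 \<and> eps' > rho")
      case True
      have den: "4 * rho = 2 * (real d)\<^sup>2 * eps0\<^sup>2" by (simp add: rho_def)
      have m: "measure (M x) S \<le> exp eps' * measure (M x') S + exp (- ((eps' - rho)\<^sup>2 / (4 * rho)))"
      proof (rule zcdp_core)
        show "renyi_star (M x) (M x') \<le> ereal rho"
          using Z x x' di unfolding zcdp_def rho_def by blast
      qed (use True alg' x x' S in auto)
      show ?thesis using m unfolding den by (simp only: rho_def)
    next
      case False
      have r0: "rho \<ge> 0" by (simp add: rho_def)
      have r1: "eps' \<ge> rho" using ep by (simp add: rho_def)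
      have "rho = 0 \<or> eps' = rho" using False r0 r1 by linarith
      hence one: "exp (- ((eps' - (real d)\<^sup>2 * eps0\<^sup>2 / 2)\<^sup>2 / (2 * (real d)\<^sup>2 * eps0\<^sup>2))) = 1"
        unfolding rho_def by auto
      show ?thesis using triv unfolding one .
    qed
  qed
next
  let ?D = "datasets Xs d n"
  let ?U = "data_universe Xs d"
  fix eps :: "(nat \<Rightarrow> 'a) \<Rightarrow> (nat \<Rightarrow> 'a) \<Rightarrow> real"
  assume sym: "\<forall>u\<in>?U. \<forall>v\<in>?U. eps u v = eps v u \<and> 0 \<le> eps u v"
    and bdd: "bdd_above ((\<lambda>(u, v). eps u v) ` (?U \<times> ?U))"
    and H: "nabla_dp ?D n Y M eps"
  show "pure_dp ?D n Y M (SUP (u, v)\<in>?U \<times> ?U. eps u v)"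
    unfolding approx_dp_def
  proof (intro ballI allI impI)
    fix x x' i S assume x: "x \<in> ?D" and x': "x' \<in> ?D" and di: "differ_at n x x' i" and S: "S \<in> sets Y"
    have "measure (M x) S \<le> exp (eps (x i) (x' i)) * measure (M x') S"
      using H x x' di S unfolding nabla_dp_def by blast
    also have "\<dots> \<le> exp (SUP (u, v)\<in>?U \<times> ?U. eps u v) * measure (M x') S"
    proof (intro mult_right_mono exp_mono)
      have "(\<lambda>(u, v). eps u v) (x i, x' i) \<le> (SUP (u, v)\<in>?U \<times> ?U. eps u v)"
        using differ_in_datasets[OF x x' di] bdd by (intro cSUP_upper) auto
      thus "eps (x i) (x' i) \<le> (SUP (u, v)\<in>?U \<times> ?U. eps u v)" by simp
    qed auto
    finally show "measure (M x) S \<le> exp (SUP (u, v)\<in>?U \<times> ?U. eps u v) * measure (M x') S + 0" by simp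
  qed
next
  let ?D = "datasets Xs d n"
  fix e :: real assume e: "e \<ge> 0" and H: "pure_dp ?D n Y M e"
  show "nabla_dp ?D n Y M (\<lambda>_ _. e)"
    using H unfolding approx_dp_def nabla_dp_def by auto
  show "nabla0_dp d ?D n Y M e"
    unfolding nabla0_dp_def nabla_dp_def
  proof (intro ballI allI impI)
    fix x x' i S assume x: "x \<in> ?D" and x': "x' \<in> ?D" and di: "differ_at n x x' i" and S: "S \<in> sets Y"
    show "measure (M x) S \<le> exp (e * real (hamming0 d (x i) (x' i))) * measure (M x') S"
    proof (cases "hamming0 d (x i) (x' i) = 0")
      case True
      hence "x = x'" using hamming0_zero differ_in_datasets[OF x x' di] differ_eq[OF x x' di] by blast
      moreover have one: "exp (e * real (hamming0 d (x i) (x' i))) = 1" using True by simp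
      ultimately show ?thesis unfolding one by simp
    next
      case False
      have "measure (M x) S \<le> exp e * measure (M x') S"
        using H x x' di S unfolding approx_dp_def by fastforce
      also have "\<dots> \<le> exp (e * real (hamming0 d (x i) (x' i))) * measure (M x') S"
        using False e by (intro mult_right_mono) (auto simp: mult_le_cancel_left1)
      finally show ?thesis .
    qed
  qed
qed

end
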